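(* Let $k\ge3$ and $A,B\in\mathbb F_2^{k\times k}$. Suppose (1) the $k\times 2k$ matrix $[A\,|\,B]$ has rank $k$, and (2) $AEB^T+BE^{-T}A^T=0$ for every $E\in GL(k,\mathbb F_2)$. Then $A=0$ or $B=0$.
   Context: Arithmetic over $\mathbb F_2$; $E^{-T}=(E^{-1})^T$. *)

theory Defs
  imports "HOL-Analysis.Analysis" "HOL-Library.Z2"
begin

definition hcat :: "'a^'n^'m \<Rightarrow> 'a^'p^'m \<Rightarrow> 'a^('n + 'p)^'m" where
  "hcat A B = (\<chi> i. \<chi> j. (case j of Inl a \<Rightarrow> A $ i $ a | Inr b \<Rightarrow> B $ i $ b))"

end

theory Submission
  imports Defs
begin

lemma bit_add_self: "(x::bit) + x = 0"
  by (cases x) simp_all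

lemma bit_add_eq0: "(x::bit) + y = 0 \<Longrightarrow> x = y"
  by (cases x; cases y) simp_all

lemma matrix_inv_invol:
  fixes E :: "'a::semiring_1^'n^'n"
  assumes "E ** E = mat 1"
  shows "invertible E" "matrix_inv E = E"
proof -
  show "invertible E" using assms unfolding invertible_def by blast
  let ?X = "matrix_inv E"
  have X: "E ** ?X = mat 1 \<and> ?X ** E = mat 1"
    unfolding matrix_inv_def by (rule someI[of _ E]) (use assms in simp)
  have "?X = (E ** E) ** ?X" using assms by simp
  also have "\<dots> = E" using X by (simp flip: matrix_mul_assoc)
  finally show "matrix_inv E = E" .
qed

lemma entry3: "((X::'a::comm_semiring_1^'n^'m) ** (Y::'a^'n^'n) ** transpose (Z::'a^'n^'m))$p$q
   = (\<Sum>r\<in>UNIV. \<Sum>c\<in>UNIV. X$p$r * Y$r$c * Z$q$c)"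
  by (simp add: matrix_matrix_mult_def transpose_def sum_distrib_left sum_distrib_right mult.assoc)
     (rule sum.swap)

lemma matrix_add_rdistrib': "((A::'a::semiring_1^'n^'m) + B) ** (C::'a^'p^'n) = A ** C + B ** C"
  by (vector matrix_matrix_mult_def sum.distrib[symmetric] field_simps)

definition nm :: "'k \<Rightarrow> 'k \<Rightarrow> 'a::semiring_1^'k^'k" where
  "nm i j = (\<chi> r c. if r = i \<and> c = j then 1 else 0)"

definition tv :: "'k \<Rightarrow> 'k \<Rightarrow> 'a::semiring_1^'k^'k" where
  "tv i j = mat 1 + nm i j"

lemma nm_sq: "i \<noteq> j \<Longrightarrow> (nm i j :: 'a::semiring_1^'k^'k) ** nm i j = 0"
  unfolding nm_def matrix_matrix_mult_def
  by (auto simp: vec_eq_iff intro!: sum.neutral)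

lemma nm_add_self: "(nm i j :: bit^'k^'k) + nm i j = 0"
  by (simp add: vec_eq_iff bit_add_self)

lemma tv_sq: "i \<noteq> j \<Longrightarrow> (tv i j :: bit^'k^'k) ** tv i j = mat 1"
  unfolding tv_def matrix_add_ldistrib matrix_add_rdistrib'
  by (simp add: nm_sq add.assoc flip: add.assoc[of "nm i j" "nm i j"] add: nm_add_self)

lemma tv_transpose: "transpose (tv i j :: 'a::semiring_1^'k^'k) = tv j i"
  unfolding tv_def nm_def transpose_def mat_def by (auto simp: vec_eq_iff)

lemma entry_nm: "((X::'a::comm_semiring_1^'n^'m) ** nm i j ** transpose (Z::'a^'n^'m))$p$q = X$p$i * Z$q$j"
proof -
  have e: "(\<Sum>c\<in>UNIV. if r = i \<and> c = j then v else 0) = (if r = i then v else 0)" for r and v :: 'a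
    by (cases "r = i") (simp_all add: sum.delta)
  show ?thesis unfolding entry3 nm_def
    by (simp add: if_distrib if_distribR e sum.delta cong: if_cong)
qed

lemma entry_tv: "((X::'a::comm_semiring_1^'n^'m) ** tv i j ** transpose (Z::'a^'n^'m))$p$q
   = (\<Sum>r\<in>UNIV. X$p$r * Z$q$r) + X$p$i * Z$q$j"
  unfolding tv_def matrix_add_ldistrib matrix_add_rdistrib' matrix_mul_rid vector_add_component
  by (simp only: entry_nm) (simp add: matrix_matrix_mult_def transpose_def)

lemma grp_id: "(x::'a::ab_group_add) + y = ((S + x) + (T + y)) - (S + T)"
  by (simp add: algebra_simps)

lemma entry2: "((X::'a::comm_semiring_1^'n^'m) ** transpose (Z::'a^'n^'m))$p$q = (\<Sum>r\<in>UNIV. X$p$r * Z$q$r)"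
  by (simp add: matrix_matrix_mult_def transpose_def)

lemma key_entry:
  fixes A B :: "bit^'k^'k"
  assumes H: "\<forall>E :: bit^'k^'k. invertible E \<longrightarrow>
           A ** E ** transpose B + B ** transpose (matrix_inv E) ** transpose A = 0"
    and ij: "i \<noteq> j"
  shows "A$p$i * B$q$j = B$p$j * A$q$i"
proof -
  have m1: "(mat 1 :: bit^'k^'k) ** mat 1 = mat 1" by simp
  have "A ** mat 1 ** transpose B + B ** transpose (matrix_inv (mat 1)) ** transpose A = 0"
    using H matrix_inv_invol[OF m1] by auto
  then have "A ** transpose B + B ** transpose A = 0"
    using matrix_inv_invol(2)[OF m1] by (simp add: transpose_mat)
  then have h1: "(\<Sum>r\<in>UNIV. A$p$r * B$q$r) + (\<Sum>r\<in>UNIV. B$p$r * A$q$r) = 0"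
    by (drule_tac f="\<lambda>M. M$p$q" in arg_cong)
       (simp only: vector_add_component zero_index entry2)
  have "A ** tv i j ** transpose B + B ** transpose (matrix_inv (tv i j)) ** transpose A = 0"
    using H matrix_inv_invol[OF tv_sq[OF ij]] by auto
  then have "A ** tv i j ** transpose B + B ** tv j i ** transpose A = 0"
    using matrix_inv_invol(2)[OF tv_sq[OF ij]] by (simp add: tv_transpose)
  then have h2: "((\<Sum>r\<in>UNIV. A$p$r * B$q$r) + A$p$i * B$q$j) + ((\<Sum>r\<in>UNIV. B$p$r * A$q$r) + B$p$j * A$q$i) = 0"
    by (drule_tac f="\<lambda>M. M$p$q" in arg_cong)
       (simp only: vector_add_component zero_index entry_tv)
  have "A$p$i * B$q$j + B$p$j * A$q$i =
     (((\<Sum>r\<in>UNIV. A$p$r * B$q$r) + A$p$i * B$q$j) + ((\<Sum>r\<in>UNIV. B$p$r * A$q$r) + B$p$j * A$q$i))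
     - ((\<Sum>r\<in>UNIV. A$p$r * B$q$r) + (\<Sum>r\<in>UNIV. B$p$r * A$q$r))"
    by (rule grp_id)
  also have "\<dots> = 0" by (simp only: h1 h2 diff_zero)
  finally show ?thesis by (rule bit_add_eq0)
qed

lemma outer_sym:
  fixes a b :: "bit^'k"
  assumes "\<forall>p q. a$p * b$q = b$p * a$q" "a \<noteq> 0" "b \<noteq> 0"
  shows "a = b"
proof -
  obtain p where p: "a$p = 1" using assms(2) by (auto simp: vec_eq_iff)
  obtain q where q: "b$q = 1" using assms(3) by (auto simp: vec_eq_iff)
  have "b$p * a$q = 1" using assms(1)[rule_format, of p q] p q by simp
  then have aq: "a$q = 1" by (cases "a$q") auto
  show ?thesis unfolding vec_eq_iff
  proof
    fix r have "a$r * b$q = b$r * a$q" using assms(1) by blast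
    then show "a$r = b$r" using q aq by (cases "a$r"; cases "b$r") simp_all
  qed
qed

lemma comb:
  fixes f g :: "'k \<Rightarrow> 'v::zero"
  assumes P: "\<And>i j. i \<noteq> j \<Longrightarrow> f i \<noteq> 0 \<Longrightarrow> g j \<noteq> 0 \<Longrightarrow> f i = g j"
    and fi: "f i0 \<noteq> 0" and gj: "g j0 \<noteq> 0"
  shows "\<exists>u w. \<forall>l. f l \<in> {0,u,w} \<and> g l \<in> {0,u,w}"
proof (cases "\<exists>i j. i \<noteq> j \<and> f i \<noteq> 0 \<and> g j \<noteq> 0")
  case True
  then obtain i j where ij: "i \<noteq> j" "f i \<noteq> 0" "g j \<noteq> 0" by blast
  let ?u = "f i" let ?w = "if f j = 0 then g i else f j"
  have "\<forall>l. f l \<in> {0,?u,?w} \<and> g l \<in> {0,?u,?w}"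
  proof
    fix l
    have "f l \<in> {0,?u,?w}"
      using P[of l j] P[of i j] ij by (cases "l = j") auto
    moreover have "g l \<in> {0,?u,?w}"
      using P[of i l] P[of j i] ij by (cases "l = i") auto
    ultimately show "f l \<in> {0,?u,?w} \<and> g l \<in> {0,?u,?w}" by blast
  qed
  then show ?thesis by blast
next
  case False
  then have e: "i0 = j0" using fi gj by blast
  have "\<forall>l. f l \<in> {0,f i0,g i0} \<and> g l \<in> {0,f i0,g i0}"
    using False fi gj e by (metis insertCI)
  then show ?thesis by blast
qed

lemma rank_le2:
  fixes M :: "bit^'n^'m"
  assumes "\<forall>c. column c M \<in> {0,u,w}"
  shows "rank M \<le> 2"
proof -
  define R1 :: "bit^'n" where "R1 = (\<chi> c. if column c M = u then 1 else 0)"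
  define R2 :: "bit^'n" where "R2 = (\<chi> c. if column c M \<noteq> u \<and> column c M = w then 1 else 0)"
  have rowe: "row p M = u$p *s R1 + w$p *s R2" for p
    unfolding vec_eq_iff
  proof
    fix c
    have "column c M \<in> {0,u,w}" using assms by blast
    then show "row p M $ c = (u$p *s R1 + w$p *s R2) $ c"
      unfolding R1_def R2_def row_def
      by (auto simp: column_def vec_eq_iff)
  qed
  have "rows M \<subseteq> vec.span {R1, R2}"
  proof
    fix x assume "x \<in> rows M"
    then obtain p where "x = row p M" by (auto simp: rows_def)
    then show "x \<in> vec.span {R1, R2}"
      by (simp add: rowe vec.span_add vec.span_scale vec.span_base)
  qed
  then have "vec.dim (rows M) \<le> card {R1, R2}"
    by (rule vec.dim_le_card) simp
  also have "\<dots> \<le> 2" by (simp add: card_insert_le_m1)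
  finally show ?thesis by (simp add: row_rank_def_gen)
qed

theorem mainTheorem9:
  fixes A B :: "bit^'k^'k"
  assumes "CARD('k) \<ge> 3"
    and "rank (hcat A B) = CARD('k)"
    and "\<forall>E :: bit^'k^'k. invertible E \<longrightarrow>
           A ** E ** transpose B + B ** transpose (matrix_inv E) ** transpose A = 0"
  shows "A = 0 \<or> B = 0"
proof (rule ccontr)
  assume nz: "\<not> (A = 0 \<or> B = 0)"
  obtain i0 where i0: "column i0 A \<noteq> 0"
    using nz by (auto simp: vec_eq_iff column_def)
  obtain j0 where j0: "column j0 B \<noteq> 0"
    using nz by (auto simp: vec_eq_iff column_def)
  have P: "column i A = column j B"
    if "i \<noteq> j" "column i A \<noteq> 0" "column j B \<noteq> 0" for i j
  proof (rule outer_sym[OF _ that(2,3)])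
    show "\<forall>p q. column i A $ p * column j B $ q = column j B $ p * column i A $ q"
      using key_entry[OF assms(3) that(1)] by (simp add: column_def)
  qed
  obtain u w where uw: "\<forall>l. column l A \<in> {0,u,w} \<and> column l B \<in> {0,u,w}"
    using comb[of "\<lambda>l. column l A" "\<lambda>l. column l B", OF P i0 j0] by blast
  have "\<forall>c. column c (hcat A B) \<in> {0,u,w}"
  proof
    fix c :: "'k + 'k"
    show "column c (hcat A B) \<in> {0,u,w}"
    proof (cases c)
      case (Inl a)
      then have "column c (hcat A B) = column a A"
        by (simp add: column_def hcat_def)
      then show ?thesis using uw by simp
    next
      case (Inr b)
      then have "column c (hcat A B) = column b B"
        by (simp add: column_def hcat_def)
      then show ?thesis using uw by simp
    qed
  qed
  then have "rank (hcat A B) \<le> 2" by (rule rank_le2)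
  then show False using assms(1,2) by simp
qed

end
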